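(* Let $d$ be odd and let $\sigma_\triangle$ be a sign pattern of length $d+1$ with which the pair $(2,1)$ is compatible. For a polynomial realizing $(\sigma_\triangle,(2,1))$ denote its real roots by $-\beta<0<\alpha_1<\alpha_2$. (3) If all monomials of odd degree have positive sign in $\sigma_\triangle$, then there exist polynomials realizing $(\sigma_\triangle,(2,1))$, and every such polynomial satisfies $\beta<\alpha_1<\alpha_2$. (4) If all monomials of even degree have positive sign in $\sigma_\triangle$, then there exist polynomials realizing $(\sigma_\triangle,(2,1))$, and every such polynomial satisfies $\alpha_1<\alpha_2<\beta$.
   Context: A sign pattern of length $d+1$ is a sequence of $d+1$ symbols $+$/$-$ beginning with $+$; a monic polynomial $x^d+\sum_{j<d}a_jx^j$ with all $a_j\neq0$ defines the sign pattern $(+,\operatorname{sign}(a_{d-1}),\ldots,\operatorname{sign}(a_0))$, and the sign of the monomial $x^j$ in the pattern is the entry corresponding to $a_j$. For a sign pattern with $c$ sign changes and $p$ sign preservations ($c+p=d$), a pair $(pos,neg)$ is compatible with it if $pos\le c$, $c-pos$ even, $neg\le p$, $p-neg$ even. A monic polynomial realizes the couple $(\sigma,(pos,neg))$ if it has all coefficients non-zero, defines $\sigma$, has exactly $pos$ positive and $neg$ negative real roots, all simple, and no other real roots. *)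

theory Defs
  imports "HOL-Computational_Algebra.Polynomial"
begin

text \<open>A sign pattern is a list of booleans (True = +, False = -), its first entry
  corresponds to the leading coefficient a_d (which must be +), entry k corresponds to a_(d-k).\<close>

definition is_sign_pattern :: "nat \<Rightarrow> bool list \<Rightarrow> bool" where
  "is_sign_pattern d \<sigma> \<longleftrightarrow> length \<sigma> = d + 1 \<and> \<sigma> ! 0 = True"

definition sign_changes :: "bool list \<Rightarrow> nat" where
  "sign_changes \<sigma> = card {i. Suc i < length \<sigma> \<and> \<sigma> ! i \<noteq> \<sigma> ! Suc i}"

definition sign_preservations :: "bool list \<Rightarrow> nat" where
  "sign_preservations \<sigma> = card {i. Suc i < length \<sigma> \<and> \<sigma> ! i = \<sigma> ! Suc i}"

definition compatible :: "bool list \<Rightarrow> nat \<Rightarrow> nat \<Rightarrow> bool" where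
  "compatible \<sigma> pos neg \<longleftrightarrow>
     pos \<le> sign_changes \<sigma> \<and> even (sign_changes \<sigma> - pos) \<and>
     neg \<le> sign_preservations \<sigma> \<and> even (sign_preservations \<sigma> - neg)"

definition monomial_sign :: "bool list \<Rightarrow> nat \<Rightarrow> bool" where
  "monomial_sign \<sigma> j = \<sigma> ! (length \<sigma> - 1 - j)"

definition defines_pattern :: "real poly \<Rightarrow> bool list \<Rightarrow> bool" where
  "defines_pattern p \<sigma> \<longleftrightarrow> degree p + 1 = length \<sigma> \<and>
     (\<forall>j \<le> degree p. coeff p j > 0 \<longleftrightarrow> monomial_sign \<sigma> j)"

definition realizes :: "real poly \<Rightarrow> bool list \<Rightarrow> nat \<Rightarrow> nat \<Rightarrow> bool" where
  "realizes p \<sigma> pos neg \<longleftrightarrow>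
     lead_coeff p = 1 \<and>
     (\<forall>j \<le> degree p. coeff p j \<noteq> 0) \<and>
     defines_pattern p \<sigma> \<and>
     card {x::real. x > 0 \<and> poly p x = 0} = pos \<and>
     card {x::real. x < 0 \<and> poly p x = 0} = neg \<and>
     (\<forall>x::real. poly p x = 0 \<longrightarrow> x \<noteq> 0 \<and> order x p = 1)"

end

theory Submission
  imports Defs
begin


definition Tk :: "nat \<Rightarrow> real poly \<Rightarrow> real poly" where
  "Tk k p = pCons 0 (pderiv p) - smult (of_nat k) p"

lemma poly_Tk: "poly (Tk k p) x = x * poly (pderiv p) x - of_nat k * poly p x"
  by (simp add: Tk_def)

lemma coeff_Tk: "coeff (Tk k p) j = (real j - real k) * coeff p j"
  by (cases j) (auto simp: Tk_def coeff_pderiv algebra_simps)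

lemma poly_sum_upto:
  fixes q :: "real poly"
  assumes "\<forall>i>n. coeff q i = 0"
  shows "poly q x = (\<Sum>i\<le>n. coeff q i * x ^ i)"
proof -
  have dq: "degree q \<le> n" using assms by (simp add: degree_le)
  have "poly q x = (\<Sum>i\<le>degree q. coeff q i * x ^ i)" by (rule poly_altdef)
  also have "\<dots> = (\<Sum>i\<le>n. coeff q i * x ^ i)"
    by (rule sum.mono_neutral_left) (use dq in \<open>auto simp: coeff_eq_0\<close>)
  finally show ?thesis .
qed

lemma GR:
  fixes p :: "real poly"
  assumes ab: "a < b" and nz: "0 < a \<or> b < 0" and pa: "poly p a = 0" and pb: "poly p b = 0"
  shows "\<exists>z. a < z \<and> z < b \<and> poly (Tk k p) z = 0"
proof -
  have nz': "\<And>x. a \<le> x \<Longrightarrow> x \<le> b \<Longrightarrow> x \<noteq> 0" using nz ab by auto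
  define f where "f = (\<lambda>x. poly p x / x ^ k)"
  define f' where "f' = (\<lambda>x. (poly (pderiv p) x * x ^ k - poly p x * (of_nat k * x ^ (k - 1))) / (x ^ k) ^ 2)"
  have der: "(f has_derivative (\<lambda>v. f' x * v)) (at x)" if "x \<noteq> 0" for x
  proof -
    have "DERIV f x :> f' x"
      unfolding f_def f'_def
      by (rule DERIV_cong[OF DERIV_divide[OF poly_DERIV DERIV_pow]]) (use that in \<open>simp_all add: power2_eq_square\<close>)
    then show ?thesis by (simp add: has_field_derivative_def)
  qed
  have cont: "continuous_on {a..b} f"
    unfolding f_def by (intro continuous_intros) (use nz' in auto)
  have "\<exists>z. a < z \<and> z < b \<and> (\<lambda>v. f' z * v) = (\<lambda>v. 0)"
  proof (rule Rolle_deriv[OF ab _ cont])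
    show "f a = f b" using pa pb by (simp add: f_def)
    fix x assume "a < x" "x < b"
    then have "x \<noteq> 0" using nz' by auto
    then show "(f has_derivative (\<lambda>v. f' x * v)) (at x)" by (rule der)
  qed
  then obtain z where z: "a < z" "z < b" "(\<lambda>v. f' z * v) = (\<lambda>v. 0)" by blast
  have zn: "z \<noteq> 0" using nz' z by auto
  have "f' z = 0" using fun_cong[OF z(3), of 1] by simp
  then have e1: "poly (pderiv p) z * z ^ k - poly p z * (of_nat k * z ^ (k - 1)) = 0"
    using zn by (simp add: f'_def)
  have e2: "z ^ k * (z * poly (pderiv p) z - of_nat k * poly p z) = z * (poly (pderiv p) z * z ^ k - poly p z * (of_nat k * z ^ (k - 1)))"
  proof (cases k)
    case 0 then show ?thesis by simp
  next
    case (Suc m) then show ?thesis by (simp add: algebra_simps)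
  qed
  have "z ^ k * (z * poly (pderiv p) z - of_nat k * poly p z) = 0" using e1 e2 by simp
  then have "poly (Tk k p) z = 0" using zn by (simp add: poly_Tk)
  then show ?thesis using z by auto
qed


lemma order_one:
  fixes P :: "real poly"
  assumes "P \<noteq> 0" "poly P x = 0" "poly (pderiv P) x \<noteq> 0"
  shows "order x P = 1"
proof -
  have "order x (pderiv P) = 0" using assms(3) order_root by blast
  then show ?thesis using order_pderiv[OF assms(1,2)] by simp
qed

lemma pinf_lemma:
  fixes P :: "real poly"
  assumes "lead_coeff P = 1"
  shows "\<exists>T. \<forall>y\<ge>T. poly P y \<ge> 1"
  using poly_pinfty_gt_lc[of P] assms by auto

lemma minf_lemma:
  fixes P :: "real poly"
  assumes "odd (degree P)" "lead_coeff P = 1"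
  shows "\<exists>T. \<forall>y\<ge>T. poly P (-y) \<le> -1"
proof -
  define Q where "Q = - pcompose P [:0,-1:]"
  have "lead_coeff (pcompose P [:0,-1:]) = lead_coeff P * (-1) ^ degree P"
    by (subst lead_coeff_comp) auto
  then have "lead_coeff Q = 1" using assms by (simp add: Q_def lead_coeff_minus)
  then obtain T where T: "\<forall>y\<ge>T. poly Q y \<ge> 1" using pinf_lemma by blast
  have "poly Q y = - poly P (-y)" for y by (simp add: Q_def poly_pcompose)
  then have "\<forall>y\<ge>T. poly P (-y) \<le> -1" using T by (smt (verit))
  then show ?thesis by blast
qed

lemma root_structure:
  fixes P :: "real poly" and k K :: nat
  assumes od: "odd (degree P)" and lc: "lead_coeff P = 1"
    and P0: "poly P 0 > 0" and P1: "poly P 1 < 0"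
    and S: "\<And>x. x > 0 \<Longrightarrow> poly (Tk k (Tk k P)) x > 0"
    and N: "\<And>x. x < 0 \<Longrightarrow> poly (Tk K P) x < 0"
  shows "card {x. x > 0 \<and> poly P x = 0} = 2 \<and> card {x. x < 0 \<and> poly P x = 0} = 1 \<and>
         (\<forall>x. poly P x = 0 \<longrightarrow> x \<noteq> 0 \<and> order x P = 1)"
proof -
  have Pn0: "P \<noteq> 0" using lc by auto
  have g1: "a = b" if H: "0 < a" "0 < b" "poly (Tk k P) a = 0" "poly (Tk k P) b = 0" for a b
  proof (rule ccontr)
    assume "a \<noteq> b"
    then consider "a < b" | "b < a" by linarith
    then show False
    proof cases
      case 1
      then obtain z where "a < z" "poly (Tk k (Tk k P)) z = 0" using GR[of a b "Tk k P" k] H by auto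
      then show False using S[of z] H by auto
    next
      case 2
      then obtain z where "b < z" "poly (Tk k (Tk k P)) z = 0" using GR[of b a "Tk k P" k] H by auto
      then show False using S[of z] H by auto
    qed
  qed
  have no3: False if H: "0 < a" "a < b" "b < c" "poly P a = 0" "poly P b = 0" "poly P c = 0" for a b c
  proof -
    obtain z1 where z1: "a < z1" "z1 < b" "poly (Tk k P) z1 = 0" using GR[of a b P k] H by auto
    obtain z2 where z2: "b < z2" "poly (Tk k P) z2 = 0" using GR[of b c P k] H by auto
    show False using g1[of z1 z2] z1 z2 H by auto
  qed
  have simp_pos: "poly (pderiv P) a \<noteq> 0" if H: "0 < a" "0 < b" "a \<noteq> b" "poly P a = 0" "poly P b = 0" for a b
  proof
    assume d0: "poly (pderiv P) a = 0"
    then have ga: "poly (Tk k P) a = 0" using H by (simp add: poly_Tk)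
    consider "a < b" | "b < a" using H by linarith
    then show False
    proof cases
      case 1
      then obtain z where "a < z" "poly (Tk k P) z = 0" using GR[of a b P k] H by auto
      then show False using g1[of a z] ga H by auto
    next
      case 2
      then obtain z where "z < a" "b < z" "poly (Tk k P) z = 0" using GR[of b a P k] H by auto
      then show False using g1[of a z] ga H by auto
    qed
  qed
  have neg1: "a = b" if H: "a < 0" "b < 0" "poly P a = 0" "poly P b = 0" for a b
  proof (rule ccontr)
    assume "a \<noteq> b"
    then consider "a < b" | "b < a" by linarith
    then show False
    proof cases
      case 1
      then obtain z where "z < b" "poly (Tk K P) z = 0" using GR[of a b P K] H by auto
      then show False using N[of z] H by auto
    next
      case 2
      then obtain z where "z < a" "poly (Tk K P) z = 0" using GR[of b a P K] H by auto
      then show False using N[of z] H by auto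
    qed
  qed
  obtain r1 where r1: "0 < r1" "r1 < 1" "poly P r1 = 0" using poly_IVT_neg[of 0 1 P] P0 P1 by auto
  obtain T where T: "\<forall>y\<ge>T. poly P y \<ge> 1" using pinf_lemma[OF lc] by blast
  have "poly P (max T 2) \<ge> 1" using T by auto
  then obtain r2 where r2: "1 < r2" "poly P r2 = 0" using poly_IVT_pos[of 1 "max T 2" P] P1 by (auto simp: max_def split: if_splits)
  obtain T' where T': "\<forall>y\<ge>T'. poly P (-y) \<le> -1" using minf_lemma[OF od lc] by blast
  have "poly P (- max T' 1) \<le> -1" using T' by auto
  then obtain r3 where r3: "r3 < 0" "poly P r3 = 0" using poly_IVT_pos[of "- max T' 1" 0 P] P0 by (auto simp: max_def split: if_splits)
  have Spos: "{x. x > 0 \<and> poly P x = 0} = {r1, r2}"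
  proof (rule set_eqI, rule iffI)
    fix z assume "z \<in> {x. x > 0 \<and> poly P x = 0}"
    then have z: "z > 0" "poly P z = 0" by auto
    show "z \<in> {r1, r2}"
    proof (rule ccontr)
      assume "z \<notin> {r1, r2}"
      then consider "z < r1" | "r1 < z \<and> z < r2" | "r2 < z" using r1 r2 by fastforce
      then show False
      proof cases
        case 1 then show ?thesis using no3[of z r1 r2] z r1 r2 by auto
      next
        case 2 then show ?thesis using no3[of r1 z r2] z r1 r2 by auto
      next
        case 3 then show ?thesis using no3[of r1 r2 z] z r1 r2 by auto
      qed
    qed
  qed (use r1 r2 in auto)
  have Sneg: "{x. x < 0 \<and> poly P x = 0} = {r3}"
    using neg1 r3 by auto
  have "card {x. x > 0 \<and> poly P x = 0} = 2" unfolding Spos using r1 r2 by auto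
  moreover have "card {x. x < 0 \<and> poly P x = 0} = 1" unfolding Sneg by auto
  moreover have "x \<noteq> 0 \<and> order x P = 1" if x: "poly P x = 0" for x
  proof -
    have "x \<noteq> 0" using x P0 by auto
    moreover have "poly (pderiv P) x \<noteq> 0"
    proof (cases "x > 0")
      case True
      then have "x = r1 \<or> x = r2" using Spos x by auto
      then show ?thesis
      proof
        assume "x = r1" then show ?thesis using simp_pos[of x r2] r1 r2 x by auto
      next
        assume "x = r2" then show ?thesis using simp_pos[of x r1] r1 r2 x by auto
      qed
    next
      case False
      then have "x < 0" using \<open>x \<noteq> 0\<close> by auto
      then have "poly (Tk K P) x < 0" by (rule N)
      then show ?thesis using x by (auto simp: poly_Tk)
    qed
    ultimately show ?thesis using order_one[OF Pn0 x] by auto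
  qed
  ultimately show ?thesis by blast
qed


definition P_of :: "(nat \<Rightarrow> real) \<Rightarrow> nat \<Rightarrow> real poly" where
  "P_of a d = (\<Sum>j\<le>d. monom (a j) j)"

lemma coeff_P_of: "coeff (P_of a d) i = (if i \<le> d then a i else 0)"
  unfolding P_of_def by (auto simp: coeff_sum_monom coeff_sum)

lemma degree_P_of: "a d \<noteq> 0 \<Longrightarrow> degree (P_of a d) = d"
  by (rule antisym) (auto intro!: degree_le le_degree simp: coeff_P_of)

lemma poly_P_of: "poly (P_of a d) x = (\<Sum>j\<le>d. a j * x ^ j)"
  by (subst poly_sum_upto[of d]) (auto simp: coeff_P_of)

lemma poly_Tk_P_of: "poly (Tk k (P_of a d)) x = (\<Sum>j\<le>d. (real j - real k) * a j * x ^ j)"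
  by (subst poly_sum_upto[of d]) (auto simp: coeff_P_of coeff_Tk)

lemma poly_TkTk_P_of: "poly (Tk k (Tk k (P_of a d))) x = (\<Sum>j\<le>d. (real j - real k) * ((real j - real k) * a j) * x ^ j)"
  by (subst poly_sum_upto[of d]) (auto simp: coeff_P_of coeff_Tk)

lemma construct:
  fixes \<sigma> :: "bool list" and m a :: "nat \<Rightarrow> real"
  assumes ispat: "is_sign_pattern d \<sigma>" and od: "odd d"
    and m: "\<And>j. j \<le> d \<Longrightarrow> m j > 0" and md: "m d = 1"
    and a_def: "a = (\<lambda>j. (if monomial_sign \<sigma> j then 1 else -1) * m j)"
    and P0: "a 0 > 0" and P1: "(\<Sum>j\<le>d. a j) < 0"
    and S: "\<And>x. x > 0 \<Longrightarrow> (\<Sum>j\<le>d. (real j - real k) * ((real j - real k) * a j) * x ^ j) > 0"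
    and N: "\<And>x. x < 0 \<Longrightarrow> (\<Sum>j\<le>d. (real j - real K) * a j * x ^ j) < 0"
  shows "\<exists>p. realizes p \<sigma> 2 1"
proof -
  have len: "length \<sigma> = d + 1" and s0: "\<sigma> ! 0" using ispat by (auto simp: is_sign_pattern_def)
  have msd: "monomial_sign \<sigma> d" using len s0 by (simp add: monomial_sign_def)
  have ad: "a d = 1" using msd md by (simp add: a_def)
  define P where "P = P_of a d"
  have deg: "degree P = d" using ad by (simp add: P_def degree_P_of)
  have lc: "lead_coeff P = 1" using deg ad by (simp add: P_def coeff_P_of)
  have st: "card {x. x > 0 \<and> poly P x = 0} = 2 \<and> card {x. x < 0 \<and> poly P x = 0} = 1 \<and>
         (\<forall>x. poly P x = 0 \<longrightarrow> x \<noteq> 0 \<and> order x P = 1)"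
  proof (rule root_structure[of P k K])
    show "odd (degree P)" using deg od by simp
    show "lead_coeff P = 1" by (rule lc)
    show "poly P 0 > 0" using P0 by (simp add: P_def poly_P_of)
    show "poly P 1 < 0" using P1 by (simp add: P_def poly_P_of)
    show "poly (Tk k (Tk k P)) x > 0" if "x > 0" for x using S[OF that] by (simp add: P_def poly_TkTk_P_of)
    show "poly (Tk K P) x < 0" if "x < 0" for x using N[OF that] by (simp add: P_def poly_Tk_P_of)
  qed
  have "realizes P \<sigma> 2 1"
    unfolding realizes_def defines_pattern_def
  proof (intro conjI allI impI)
    show "lead_coeff P = 1" by (rule lc)
    show "coeff P j \<noteq> 0" if "j \<le> degree P" for j
      using that m[of j] deg by (auto simp: P_def coeff_P_of a_def)
    show "degree P + 1 = length \<sigma>" using deg len by simp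
    show "(0 < coeff P j) = monomial_sign \<sigma> j" if "j \<le> degree P" for j
      using that m[of j] deg by (auto simp: P_def coeff_P_of a_def)
  qed (use st in auto)
  then show ?thesis by blast
qed


lemma pw1: fixes u :: real assumes "0 < u" "1 \<le> j" "j \<le> d" shows "u ^ j \<le> u + u ^ d"
proof (cases "u \<le> 1")
  case True
  then have "u ^ j \<le> u" using assms power_decreasing[of 1 j u] by auto
  moreover have "0 \<le> u ^ d" using assms by simp
  ultimately show ?thesis by linarith
next
  case False
  then have "u ^ j \<le> u ^ d" using assms by (intro power_increasing) auto
  then show ?thesis using assms by simp
qed

lemma pw0: fixes u :: real assumes "0 < u" "j \<le> d" shows "u ^ j \<le> 1 + u ^ d"
proof (cases "u \<le> 1")
  case True
  then have "u ^ j \<le> 1" using assms by (simp add: power_le_one)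
  moreover have "0 \<le> u ^ d" using assms by simp
  ultimately show ?thesis by linarith
next
  case False
  then have "u ^ j \<le> u ^ d" using assms by (intro power_increasing) auto
  then show ?thesis using assms by simp
qed

lemma sum_bound1:
  fixes f :: "nat \<Rightarrow> real"
  assumes "\<And>j. j \<le> d \<Longrightarrow> f j \<le> C - (if j = p then A else 0)" "p \<le> d"
  shows "(\<Sum>j\<le>d. f j) \<le> real (d + 1) * C - A"
proof -
  have "(\<Sum>j\<le>d. f j) \<le> (\<Sum>j\<le>d. C - (if j = p then A else 0))"
    by (rule sum_mono) (use assms in auto)
  also have "\<dots> = real (d + 1) * C - A"
    using assms(2) by (simp add: sum_subtractf)
  finally show ?thesis .
qed

lemma sum_bound2:
  fixes f :: "nat \<Rightarrow> real"
  assumes "\<And>j. j \<le> d \<Longrightarrow> f j \<le> C - (if j = p then A else 0) - (if j = q then B else 0)"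
    "p \<le> d" "q \<le> d"
  shows "(\<Sum>j\<le>d. f j) \<le> real (d + 1) * C - A - B"
proof -
  have "(\<Sum>j\<le>d. f j) \<le> (\<Sum>j\<le>d. C - (if j = p then A else 0) - (if j = q then B else 0))"
    by (rule sum_mono) (use assms in auto)
  also have "\<dots> = real (d + 1) * C - A - B"
    using assms(2,3) by (simp add: sum_subtractf)
  finally show ?thesis .
qed

lemma sum_bound2_ge:
  fixes f :: "nat \<Rightarrow> real"
  assumes "\<And>j. j \<le> d \<Longrightarrow> f j \<ge> (if j = p then A else 0) + (if j = q then B else 0) - C"
    "p \<le> d" "q \<le> d"
  shows "(\<Sum>j\<le>d. f j) \<ge> A + B - real (d + 1) * C"
proof -
  have "(\<Sum>j\<le>d. - f j) \<le> real (d + 1) * C - A - B"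
  proof (rule sum_bound2)
    show "- f j \<le> C - (if j = p then A else 0) - (if j = q then B else 0)" if "j \<le> d" for j
      using assms(1)[OF that] by linarith
  qed (use assms in auto)
  then show ?thesis by (simp add: sum_negf)
qed

definition eps :: "nat \<Rightarrow> real" where "eps d = 1 / (4 * real d ^ 3)"

lemma eps_props:
  assumes "d \<ge> 1"
  shows "0 < eps d" "eps d \<le> 1" "real (d + 1) * (real d * eps d) < 1"
    "real (d + 1) * (real d ^ 2 * eps d) < 1"
proof -
  have d1: "real d \<ge> 1" using assms by simp
  show "0 < eps d" using d1 by (simp add: eps_def)
  have "real d ^ 3 \<ge> 1" using d1 by (rule one_le_power)
  then have "4 * real d ^ 3 \<ge> 1" by simp
  then show "eps d \<le> 1" unfolding eps_def by (simp add: divide_le_eq)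
  have e: "real (d + 1) * (real d ^ 2 * eps d) = (real d + 1) / (4 * real d)"
    using d1 by (simp add: eps_def power2_eq_square power3_eq_cube field_simps)
  have "(real d + 1) / (4 * real d) < 1" using d1 by (simp add: field_simps)
  then show "real (d + 1) * (real d ^ 2 * eps d) < 1" using e by simp
  have h: "real d * eps d \<le> real d ^ 2 * eps d"
    using d1 \<open>0 < eps d\<close> by (intro mult_right_mono) (auto simp: power2_eq_square)
  have "real (d + 1) * (real d * eps d) \<le> real (d + 1) * (real d ^ 2 * eps d)"
    by (rule mult_left_mono[OF h]) simp
  then show "real (d + 1) * (real d * eps d) < 1" using \<open>real (d + 1) * (real d ^ 2 * eps d) < 1\<close> by linarith
qed


lemma sq_ge1: "j \<noteq> k \<Longrightarrow> 1 \<le> (real j - real k) * (real j - real k)"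
proof -
  assume "j \<noteq> k"
  then have "1 \<le> \<bar>real j - real k\<bar>" by linarith
  then have "1 * 1 \<le> \<bar>real j - real k\<bar> * \<bar>real j - real k\<bar>" by (intro mult_mono) auto
  then show ?thesis by (simp add: abs_mult_self_eq)
qed

lemma sq_le: "j \<le> d \<Longrightarrow> k \<le> d \<Longrightarrow> (real j - real k) * (real j - real k) \<le> real d * real d"
proof -
  assume "j \<le> d" "k \<le> d"
  then have "\<bar>real j - real k\<bar> \<le> real d" by linarith
  then have "\<bar>real j - real k\<bar> * \<bar>real j - real k\<bar> \<le> real d * real d" by (intro mult_mono) auto
  then show ?thesis by (simp add: abs_mult_self_eq)
qed

lemma case3_exists:
  fixes \<sigma> :: "bool list" and d k :: nat
  assumes ispat: "is_sign_pattern d \<sigma>" and od: "odd d" and ek: "even k" and k0: "0 < k" and kd: "k < d"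
    and hodd: "\<And>j. j \<le> d \<Longrightarrow> odd j \<Longrightarrow> monomial_sign \<sigma> j"
    and h0: "monomial_sign \<sigma> 0" and hk: "\<not> monomial_sign \<sigma> k"
  shows "\<exists>p. realizes p \<sigma> 2 1"
proof -
  define \<epsilon> where "\<epsilon> = eps d"
  have d3: "d \<ge> 3" using od ek k0 kd by presburger
  then have d1: "d \<ge> 1" by simp
  note ep = eps_props[OF d1, folded \<epsilon>_def]
  define m where "m = (\<lambda>j. if odd j \<or> j = 0 then 1 else if j = k then real d + 1 else \<epsilon>)"
  define a where "a = (\<lambda>j. (if monomial_sign \<sigma> j then 1 else -1) * m j)"
  have aodd: "a j = 1" if "j \<le> d" "odd j" for j using hodd[OF that] that by (simp add: a_def m_def)
  have a0: "a 0 = 1" using h0 by (simp add: a_def m_def)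
  have ak: "a k = - (real d + 1)" using hk ek k0 by (simp add: a_def m_def)
  have aoth: "\<bar>a j\<bar> = \<epsilon>" if "even j" "j \<noteq> 0" "j \<noteq> k" for j
    using that ep by (auto simp: a_def m_def)
  have ale1: "a j \<le> 1 - (if j = k then real d + 2 else 0)" if "j \<le> d" for j
  proof (cases "odd j \<or> j = 0 \<or> j = k")
    case True then show ?thesis using aodd[OF that] a0 ak ek by auto
  next
    case False then have "\<bar>a j\<bar> = \<epsilon>" using aoth by auto
    then show ?thesis using ep False by auto
  qed
  show ?thesis
  proof (rule construct[OF ispat od, of m a k 0])
    show "m j > 0" if "j \<le> d" for j using ep by (simp add: m_def)
    show "m d = 1" using od by (simp add: m_def)
    show "a = (\<lambda>j. (if monomial_sign \<sigma> j then 1 else -1) * m j)" by (simp add: a_def)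
    show "a 0 > 0" using a0 by simp
    have "(\<Sum>j\<le>d. a j) \<le> real (d + 1) * 1 - (real d + 2)"
      by (rule sum_bound1[of d a 1 k "real d + 2", OF ale1]) (use kd in simp_all)
    then show "(\<Sum>j\<le>d. a j) < 0" by simp
  next
    fix x :: real assume x: "x > 0"
    define C where "C = real d * real d * \<epsilon> * (x + x ^ d)"
    have C0: "C \<ge> 0" using x ep by (simp add: C_def)
    have "(\<Sum>j\<le>d. (real j - real k) * ((real j - real k) * a j) * x ^ j) \<ge> x + x ^ d - real (d + 1) * C"
    proof (rule sum_bound2_ge)
      fix j assume jd: "j \<le> d"
      have xj: "x ^ j > 0" using x by simp
      let ?t = "(real j - real k) * ((real j - real k) * a j) * x ^ j"
      show "?t \<ge> (if j = 1 then x else 0) + (if j = d then x ^ d else 0) - C"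
      proof (cases "odd j")
        case True
        have jk: "j \<noteq> k" using True ek by auto
        have teq: "?t = ((real j - real k) * (real j - real k)) * x ^ j" using aodd[OF jd True] by simp
        have "((real j - real k) * (real j - real k)) * x ^ j \<ge> 1 * x ^ j"
          by (rule mult_right_mono[OF sq_ge1[OF jk]]) (use xj in simp)
        then have "?t \<ge> x ^ j" unfolding teq by simp
        moreover have "(if j = 1 then x else 0) + (if j = d then x ^ d else 0) \<le> x ^ j" using d3 xj by auto
        ultimately show ?thesis using C0 by linarith
      next
        case False
        then have j1: "j \<noteq> 1" "j \<noteq> d" using od by auto
        show ?thesis
        proof (cases "j = 0 \<or> j = k")
          case True
          then have "?t \<ge> 0" using a0 by (auto simp: k0)
          then show ?thesis using j1 C0 by auto
        next
          case False2: False
          then have aj: "\<bar>a j\<bar> = \<epsilon>" using aoth False by auto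
          have "\<bar>?t\<bar> = ((real j - real k) * (real j - real k)) * \<epsilon> * x ^ j"
            using aj x by (simp add: abs_mult abs_mult_self_eq)
          also have "\<dots> \<le> (real d * real d) * \<epsilon> * (x + x ^ d)"
          proof (rule mult_mono)
            show "(real j - real k) * (real j - real k) * \<epsilon> \<le> real d * real d * \<epsilon>"
              by (rule mult_right_mono[OF sq_le]) (use jd kd ep in auto)
            show "x ^ j \<le> x + x ^ d" using pw1[OF x _ jd] False2 by simp
          qed (use ep x in auto)
          finally have "\<bar>?t\<bar> \<le> C" by (simp add: C_def)
          then show ?thesis using j1 by auto
        qed
      qed
    qed (use d3 in auto)
    moreover have "real (d + 1) * C < x + x ^ d"
    proof -
      have "real (d + 1) * C = (real (d + 1) * (real d ^ 2 * \<epsilon>)) * (x + x ^ d)"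
        by (simp add: C_def power2_eq_square)
      also have "\<dots> < 1 * (x + x ^ d)" using ep(4) x by (intro mult_strict_right_mono) (auto intro: add_pos_pos)
      finally show ?thesis by simp
    qed
    ultimately show "(\<Sum>j\<le>d. (real j - real k) * ((real j - real k) * a j) * x ^ j) > 0" by linarith
  next
    fix x :: real assume x: "x < 0"
    define u where "u = - x"
    have u: "u > 0" using x by (simp add: u_def)
    have xu: "x = - u" by (simp add: u_def)
    define C where "C = real d * \<epsilon> * (u + u ^ d)"
    have C0: "C \<ge> 0" using u ep by (simp add: C_def)
    have "(\<Sum>j\<le>d. (real j - real 0) * a j * x ^ j) \<le> real (d + 1) * C - u - u ^ d"
    proof (rule sum_bound2)
      fix j assume jd: "j \<le> d"
      have uj: "u ^ j > 0" using u by simp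
      let ?t = "(real j - real 0) * a j * x ^ j"
      show "?t \<le> C - (if j = 1 then u else 0) - (if j = d then u ^ d else 0)"
      proof (cases "odd j")
        case True
        have "?t = - (real j * u ^ j)" using aodd[OF jd True] True by (simp add: xu power_minus_odd)
        moreover have "real j * u ^ j \<ge> 1 * u ^ j" using True uj by (intro mult_right_mono) (auto elim: oddE)
        moreover have "(if j = 1 then u else 0) + (if j = d then u ^ d else 0) \<le> u ^ j" using d3 uj by auto
        ultimately show ?thesis using C0 by linarith
      next
        case False
        then have j1: "j \<noteq> 1" "j \<noteq> d" using od by auto
        show ?thesis
        proof (cases "j = 0 \<or> j = k")
          case True
          have nn: "real k * (real d + 1) * u ^ k \<ge> 0" using u by simp
          have "?t \<le> 0"
          proof (cases "j = 0")
            case True then show ?thesis by simp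
          next
            case False
            then have jk: "j = k" using \<open>j = 0 \<or> j = k\<close> by simp
            have "?t = - (real k * (real d + 1) * u ^ k)" unfolding jk ak using ek by (simp add: xu power_minus_even) (simp add: algebra_simps)
            then show ?thesis using nn by linarith
          qed
          then show ?thesis using j1 C0 by auto
        next
          case False2: False
          then have aj: "\<bar>a j\<bar> = \<epsilon>" using aoth False by auto
          have "\<bar>?t\<bar> = real j * \<epsilon> * u ^ j"
            using aj u by (simp add: abs_mult xu power_abs)
          also have "\<dots> \<le> real d * \<epsilon> * (u + u ^ d)"
          proof (intro mult_mono)
            show "u ^ j \<le> u + u ^ d" using pw1[OF u _ jd] False2 by simp
          qed (use ep u jd in auto)
          finally have "\<bar>?t\<bar> \<le> C" by (simp add: C_def)
          then show ?thesis using j1 by auto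
        qed
      qed
    qed (use d3 in auto)
    moreover have "real (d + 1) * C < u + u ^ d"
    proof -
      have "real (d + 1) * C = (real (d + 1) * (real d * \<epsilon>)) * (u + u ^ d)"
        by (simp add: C_def)
      also have "\<dots> < 1 * (u + u ^ d)" using ep(3) u by (intro mult_strict_right_mono) (auto intro: add_pos_pos)
      finally show ?thesis by simp
    qed
    ultimately show "(\<Sum>j\<le>d. (real j - real 0) * a j * x ^ j) < 0" by linarith
  qed
qed


lemma case4_exists:
  fixes \<sigma> :: "bool list" and d n :: nat
  assumes ispat: "is_sign_pattern d \<sigma>" and od: "odd d" and on: "odd n" and nd: "n + 2 \<le> d"
    and hev: "\<And>j. j \<le> d \<Longrightarrow> even j \<Longrightarrow> monomial_sign \<sigma> j"
    and hn: "\<not> monomial_sign \<sigma> n"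
  shows "\<exists>p. realizes p \<sigma> 2 1"
proof -
  define \<epsilon> where "\<epsilon> = eps d"
  have d3: "d \<ge> 3" using od on nd by presburger
  then have d1: "d \<ge> 1" by simp
  have n1: "n \<ge> 1" using on by presburger
  note ep = eps_props[OF d1, folded \<epsilon>_def]
  have len: "length \<sigma> = d + 1" and s0: "\<sigma> ! 0" using ispat by (auto simp: is_sign_pattern_def)
  have msd: "monomial_sign \<sigma> d" using len s0 by (simp add: monomial_sign_def)
  define m where "m = (\<lambda>j. if j = 0 \<or> j = d then 1 else if j = n then real d + 1 else \<epsilon>)"
  define a where "a = (\<lambda>j. (if monomial_sign \<sigma> j then 1 else -1) * m j)"
  have a0: "a 0 = 1" using hev[of 0] by (simp add: a_def m_def)
  have ad: "a d = 1" using msd by (simp add: a_def m_def)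
  have an: "a n = - (real d + 1)" using hn nd n1 by (simp add: a_def m_def)
  have aoth: "\<bar>a j\<bar> = \<epsilon>" if "j \<noteq> 0" "j \<noteq> d" "j \<noteq> n" for j
    using that ep by (auto simp: a_def m_def)
  have ale1: "a j \<le> 1 - (if j = n then real d + 2 else 0)" if "j \<le> d" for j
  proof (cases "j = 0 \<or> j = d \<or> j = n")
    case True then show ?thesis using a0 ad an nd by auto
  next
    case False then have "\<bar>a j\<bar> = \<epsilon>" using aoth by auto
    then show ?thesis using ep False by auto
  qed
  show ?thesis
  proof (rule construct[OF ispat od, of m a n "n + 1"])
    show "m j > 0" if "j \<le> d" for j using ep by (simp add: m_def)
    show "m d = 1" by (simp add: m_def)
    show "a = (\<lambda>j. (if monomial_sign \<sigma> j then 1 else -1) * m j)" by (simp add: a_def)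
    show "a 0 > 0" using a0 by simp
    have "(\<Sum>j\<le>d. a j) \<le> real (d + 1) * 1 - (real d + 2)"
      by (rule sum_bound1[of d a 1 n "real d + 2", OF ale1]) (use nd in simp_all)
    then show "(\<Sum>j\<le>d. a j) < 0" by simp
  next
    fix x :: real assume x: "x > 0"
    define C where "C = real d * real d * \<epsilon> * (1 + x ^ d)"
    have C0: "C \<ge> 0" using x ep by (simp add: C_def)
    have "(\<Sum>j\<le>d. (real j - real n) * ((real j - real n) * a j) * x ^ j) \<ge> 1 + x ^ d - real (d + 1) * C"
    proof (rule sum_bound2_ge)
      fix j assume jd: "j \<le> d"
      have xj: "x ^ j > 0" using x by simp
      let ?t = "(real j - real n) * ((real j - real n) * a j) * x ^ j"
      show "?t \<ge> (if j = 0 then 1 else 0) + (if j = d then x ^ d else 0) - C"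
      proof (cases "j = 0 \<or> j = d")
        case True
        have jn: "j \<noteq> n" using True on od nd by auto
        have teq: "?t = ((real j - real n) * (real j - real n)) * x ^ j" using True a0 ad by auto
        have "((real j - real n) * (real j - real n)) * x ^ j \<ge> 1 * x ^ j"
          by (rule mult_right_mono[OF sq_ge1[OF jn]]) (use xj in simp)
        then have "?t \<ge> x ^ j" unfolding teq by simp
        moreover have "(if j = 0 then 1 else 0) + (if j = d then x ^ d else 0) \<le> x ^ j" using d3 xj True by auto
        ultimately show ?thesis using C0 by linarith
      next
        case False
        show ?thesis
        proof (cases "j = n")
          case True
          then show ?thesis using False C0 by auto
        next
          case False2: False
          then have aj: "\<bar>a j\<bar> = \<epsilon>" using aoth False by auto
          have "\<bar>?t\<bar> = ((real j - real n) * (real j - real n)) * \<epsilon> * x ^ j"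
            using aj x by (simp add: abs_mult abs_mult_self_eq)
          also have "\<dots> \<le> (real d * real d) * \<epsilon> * (1 + x ^ d)"
          proof (rule mult_mono)
            show "(real j - real n) * (real j - real n) * \<epsilon> \<le> real d * real d * \<epsilon>"
              by (rule mult_right_mono[OF sq_le]) (use jd nd ep in auto)
            show "x ^ j \<le> 1 + x ^ d" using pw0[OF x jd] by simp
          qed (use ep x in auto)
          finally have "\<bar>?t\<bar> \<le> C" by (simp add: C_def)
          then show ?thesis using False by auto
        qed
      qed
    qed (use d3 in auto)
    moreover have "real (d + 1) * C < 1 + x ^ d"
    proof -
      have "real (d + 1) * C = (real (d + 1) * (real d ^ 2 * \<epsilon>)) * (1 + x ^ d)"
        by (simp add: C_def power2_eq_square)
      also have "\<dots> < 1 * (1 + x ^ d)" using ep(4) x by (intro mult_strict_right_mono) (auto intro: add_pos_pos)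
      finally show ?thesis by simp
    qed
    ultimately show "(\<Sum>j\<le>d. (real j - real n) * ((real j - real n) * a j) * x ^ j) > 0" by linarith
  next
    fix x :: real assume x: "x < 0"
    define u where "u = - x"
    have u: "u > 0" using x by (simp add: u_def)
    have xu: "x = - u" by (simp add: u_def)
    define C where "C = real d * \<epsilon> * (1 + u ^ d)"
    have C0: "C \<ge> 0" using u ep by (simp add: C_def)
    have "(\<Sum>j\<le>d. (real j - real (n + 1)) * a j * x ^ j) \<le> real (d + 1) * C - 1 - u ^ d"
    proof (rule sum_bound2)
      fix j assume jd: "j \<le> d"
      have uj: "u ^ j > 0" using u by simp
      let ?t = "(real j - real (n + 1)) * a j * x ^ j"
      show "?t \<le> C - (if j = 0 then 1 else 0) - (if j = d then u ^ d else 0)"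
      proof (cases "j = 0")
        case True
        then have "?t = - (real n + 1)" using a0 by simp
        then show ?thesis using True C0 d3 by auto
      next
        case j0: False
        show ?thesis
        proof (cases "j = d")
          case True
          have "?t = - ((real d - real n - 1) * u ^ d)" using ad od by (simp add: True xu power_minus_odd algebra_simps)
          moreover have "(real d - real n - 1) * u ^ d \<ge> 1 * u ^ d"
            by (rule mult_right_mono) (use nd u in auto)
          ultimately show ?thesis using True j0 C0 by auto
        next
          case jd': False
          show ?thesis
          proof (cases "j = n")
            case True
            have nn: "(real d + 1) * u ^ n \<ge> 0" using u by simp
            have "?t = - ((real d + 1) * u ^ n)" unfolding True an using on
              by (simp add: xu power_minus_odd)
            then show ?thesis using nn j0 jd' C0 by auto
          next
            case False
            then have aj: "\<bar>a j\<bar> = \<epsilon>" using aoth j0 jd' by auto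
            have "\<bar>?t\<bar> = \<bar>real j - real (n + 1)\<bar> * \<epsilon> * u ^ j"
              using aj u by (simp add: abs_mult xu power_abs)
            also have "\<dots> \<le> real d * \<epsilon> * (1 + u ^ d)"
            proof (rule mult_mono)
              show "\<bar>real j - real (n + 1)\<bar> * \<epsilon> \<le> real d * \<epsilon>"
                by (rule mult_right_mono) (use jd nd ep in auto)
              show "u ^ j \<le> 1 + u ^ d" using pw0[OF u jd] by simp
            qed (use ep u in auto)
            finally have "\<bar>?t\<bar> \<le> C" by (simp add: C_def)
            then show ?thesis using j0 jd' by auto
          qed
        qed
      qed
    qed (use d3 in auto)
    moreover have "real (d + 1) * C < 1 + u ^ d"
    proof -
      have "real (d + 1) * C = (real (d + 1) * (real d * \<epsilon>)) * (1 + u ^ d)"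
        by (simp add: C_def)
      also have "\<dots> < 1 * (1 + u ^ d)" using ep(3) u by (intro mult_strict_right_mono) (auto intro: add_pos_pos)
      finally show ?thesis by simp
    qed
    ultimately show "(\<Sum>j\<le>d. (real j - real (n + 1)) * a j * x ^ j) < 0" by linarith
  qed
qed



lemma card_Suc_split:
  "card {i. i < Suc n \<and> P i} = card {i. i < n \<and> P i} + (if P n then 1 else 0)"
proof (cases "P n")
  case True
  have "{i. i < Suc n \<and> P i} = insert n {i. i < n \<and> P i}" using True by auto
  then show ?thesis using True by simp
next
  case False
  have "{i. i < Suc n \<and> P i} = {i. i < n \<and> P i}" using False less_Suc_eq by auto
  then show ?thesis using False by simp
qed

lemma parity_changes:
  fixes \<sigma> :: "bool list"
  shows "n < length \<sigma> \<Longrightarrow> even (card {i. i < n \<and> \<sigma> ! i \<noteq> \<sigma> ! Suc i}) = (\<sigma> ! 0 = \<sigma> ! n)"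
proof (induction n)
  case 0 then show ?case by simp
next
  case (Suc n)
  then have IH: "even (card {i. i < n \<and> \<sigma> ! i \<noteq> \<sigma> ! Suc i}) = (\<sigma> ! 0 = \<sigma> ! n)" by simp
  show ?case unfolding card_Suc_split using IH by auto
qed

lemma pattern_facts:
  fixes \<sigma> :: "bool list"
  assumes ispat: "is_sign_pattern d \<sigma>" and comp: "compatible \<sigma> 2 1"
  shows "monomial_sign \<sigma> 0" "monomial_sign \<sigma> d" "\<exists>j\<le>d. \<not> monomial_sign \<sigma> j"
proof -
  have len: "length \<sigma> = d + 1" and s0: "\<sigma> ! 0" using ispat by (auto simp: is_sign_pattern_def)
  have sc: "sign_changes \<sigma> = card {i. i < d \<and> \<sigma> ! i \<noteq> \<sigma> ! Suc i}"
    unfolding sign_changes_def len by simp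
  have c2: "2 \<le> sign_changes \<sigma>" "even (sign_changes \<sigma> - 2)" using comp by (auto simp: compatible_def)
  then have "even (sign_changes \<sigma>)" by presburger
  then have "\<sigma> ! 0 = \<sigma> ! d" using parity_changes[of d \<sigma>] len sc by simp
  then show "monomial_sign \<sigma> 0" using s0 len by (simp add: monomial_sign_def)
  show "monomial_sign \<sigma> d" using s0 len by (simp add: monomial_sign_def)
  have "{i. i < d \<and> \<sigma> ! i \<noteq> \<sigma> ! Suc i} \<noteq> {}" using c2 sc by (metis card.empty not_numeral_le_zero)
  then obtain i where i: "i < d" "\<sigma> ! i \<noteq> \<sigma> ! Suc i" by auto
  have "\<exists>idx. idx \<le> d \<and> \<not> \<sigma> ! idx"
  proof (cases "\<sigma> ! i")
    case True then show ?thesis using i by (intro exI[of _ "Suc i"]) auto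
  next
    case False then show ?thesis using i by (intro exI[of _ i]) auto
  qed
  then obtain idx where idx: "idx \<le> d" "\<not> \<sigma> ! idx" by blast
  have "\<not> monomial_sign \<sigma> (d - idx)" using idx len by (simp add: monomial_sign_def)
  then show "\<exists>j\<le>d. \<not> monomial_sign \<sigma> j" by (intro exI[of _ "d - idx"]) auto
qed

lemma realizes_basic:
  assumes "realizes p \<sigma> 2 1" "is_sign_pattern d \<sigma>"
  shows "degree p = d" "\<And>j. j \<le> d \<Longrightarrow> coeff p j > 0 \<longleftrightarrow> monomial_sign \<sigma> j"
    "lead_coeff p = 1" "card {x::real. x < 0 \<and> poly p x = 0} = 1"
proof -
  have r: "lead_coeff p = 1" "defines_pattern p \<sigma>" "card {x::real. x < 0 \<and> poly p x = 0} = 1"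
    using assms(1) unfolding realizes_def by blast+
  have l: "length \<sigma> = d + 1" using assms(2) unfolding is_sign_pattern_def by blast
  have dp: "degree p + 1 = length \<sigma>" "\<forall>j \<le> degree p. coeff p j > 0 \<longleftrightarrow> monomial_sign \<sigma> j"
    using r(2) unfolding defines_pattern_def by blast+
  show dd: "degree p = d" using dp(1) l by simp
  show "coeff p j > 0 \<longleftrightarrow> monomial_sign \<sigma> j" if "j \<le> d" for j using dp(2) that dd by blast
  show "lead_coeff p = 1" by (rule r(1))
  show "card {x::real. x < 0 \<and> poly p x = 0} = 1" by (rule r(3))
qed

lemma unique_neg:
  fixes p :: "real poly"
  assumes "card {x::real. x < 0 \<and> poly p x = 0} = 1" "y < 0" "poly p y = 0" "z < 0" "poly p z = 0"
  shows "y = z"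
proof -
  obtain w where w: "{x::real. x < 0 \<and> poly p x = 0} = {w}" using card_1_singletonE[OF assms(1)] by blast
  have "y \<in> {x::real. x < 0 \<and> poly p x = 0}" "z \<in> {x::real. x < 0 \<and> poly p x = 0}"
    using assms(2-5) by simp_all
  then have "y = w" "z = w" unfolding w by simp_all
  then show ?thesis by simp
qed

lemma ineq3:
  fixes p :: "real poly"
  assumes r: "realizes p \<sigma> 2 1" and ispat: "is_sign_pattern d \<sigma>" and od: "odd d"
    and h0: "monomial_sign \<sigma> 0" and hodd: "\<And>j. j \<le> d \<Longrightarrow> odd j \<Longrightarrow> monomial_sign \<sigma> j"
    and a: "0 < \<alpha>" "poly p \<alpha> = 0" and b: "0 < \<beta>" "poly p (-\<beta>) = 0"
  shows "\<beta> < \<alpha>"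
proof -
  note rb = realizes_basic[OF r ispat]
  have d1: "1 \<le> d" using od by presburger
  have "0 < (\<Sum>j\<le>d. coeff p j * \<alpha> ^ j - coeff p j * (-\<alpha>) ^ j)"
  proof (rule sum_pos2[of _ 1])
    show "1 \<in> {..d}" using d1 by simp
    show "0 < coeff p 1 * \<alpha> ^ 1 - coeff p 1 * (- \<alpha>) ^ 1" using hodd[OF d1] rb(2)[OF d1] a by simp
    fix j assume "j \<in> {..d}"
    then have jd: "j \<le> d" by simp
    show "0 \<le> coeff p j * \<alpha> ^ j - coeff p j * (- \<alpha>) ^ j"
    proof (cases "odd j")
      case True
      then have "coeff p j > 0" using hodd[OF jd True] rb(2)[OF jd] by simp
      then show ?thesis using True a by (simp add: power_minus_odd)
    next
      case False then show ?thesis by (simp add: power_minus_even)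
    qed
  qed simp
  also have "\<dots> = poly p \<alpha> - poly p (-\<alpha>)" by (simp add: poly_altdef rb(1) sum_subtractf)
  finally have neg: "poly p (-\<alpha>) < 0" using a by simp
  have p0: "poly p 0 > 0" using h0 rb(2)[of 0] by (simp add: poly_0_coeff_0)
  show ?thesis
  proof (rule ccontr)
    assume "\<not> \<beta> < \<alpha>"
    moreover have "\<alpha> \<noteq> \<beta>" using neg b by auto
    ultimately have "-\<beta> < -\<alpha>" by simp
    obtain z where z: "-\<alpha> < z" "z < 0" "poly p z = 0" using poly_IVT_pos[of "-\<alpha>" 0 p] neg p0 a by auto
    have "z = -\<beta>" using unique_neg[OF rb(4) z(2,3)] b by simp
    then show False using z \<open>-\<beta> < -\<alpha>\<close> by simp
  qed
qed

lemma ineq4: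
  fixes p :: "real poly"
  assumes r: "realizes p \<sigma> 2 1" and ispat: "is_sign_pattern d \<sigma>" and od: "odd d"
    and hev: "\<And>j. j \<le> d \<Longrightarrow> even j \<Longrightarrow> monomial_sign \<sigma> j"
    and a: "0 < \<alpha>" "poly p \<alpha> = 0" and b: "0 < \<beta>" "poly p (-\<beta>) = 0"
  shows "\<alpha> < \<beta>"
proof -
  note rb = realizes_basic[OF r ispat]
  have "0 < (\<Sum>j\<le>d. coeff p j * \<alpha> ^ j + coeff p j * (-\<alpha>) ^ j)"
  proof (rule sum_pos2[of _ 0])
    show "0 < coeff p 0 * \<alpha> ^ 0 + coeff p 0 * (- \<alpha>) ^ 0" using hev[of 0] rb(2)[of 0] by simp
    fix j assume "j \<in> {..d}"
    then have jd: "j \<le> d" by simp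
    show "0 \<le> coeff p j * \<alpha> ^ j + coeff p j * (- \<alpha>) ^ j"
    proof (cases "even j")
      case True
      then have "coeff p j > 0" using hev[OF jd True] rb(2)[OF jd] by simp
      then show ?thesis using True a by (simp add: power_minus_even)
    next
      case False then show ?thesis by (simp add: power_minus_odd)
    qed
  qed simp_all
  also have "\<dots> = poly p \<alpha> + poly p (-\<alpha>)" by (simp add: poly_altdef rb(1) sum.distrib)
  finally have pos: "poly p (-\<alpha>) > 0" using a by simp
  obtain T where T: "\<forall>y\<ge>T. poly p (-y) \<le> -1" using minf_lemma[of p] rb(1,3) od by auto
  define y where "y = max T (\<alpha> + 1)"
  have "y \<ge> T" by (simp add: y_def)
  then have "poly p (-y) \<le> -1" using T by blast
  then have y: "poly p (-y) < 0" "\<alpha> < y" by (auto simp: y_def)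
  show ?thesis
  proof (rule ccontr)
    assume "\<not> \<alpha> < \<beta>"
    moreover have "\<alpha> \<noteq> \<beta>" using pos b by auto
    ultimately have "-\<alpha> < -\<beta>" by simp
    obtain z where z: "-y < z" "z < -\<alpha>" "poly p z = 0" using poly_IVT_pos[of "-y" "-\<alpha>" p] pos y by auto
    have "z = -\<beta>" using unique_neg[OF rb(4), of z "-\<beta>"] z a b by simp
    then show False using z \<open>-\<alpha> < -\<beta>\<close> by simp
  qed
qed

theorem theorem4:
  fixes d :: nat and \<sigma> :: "bool list"
  assumes "odd d" and "is_sign_pattern d \<sigma>" and "compatible \<sigma> 2 1"
  shows
   "((\<forall>j \<le> d. odd j \<longrightarrow> monomial_sign \<sigma> j) \<longrightarrow>
       (\<exists>p. realizes p \<sigma> 2 1) \<and>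
       (\<forall>p \<alpha>1 \<alpha>2 \<beta>. realizes p \<sigma> 2 1 \<and> 0 < \<alpha>1 \<and> \<alpha>1 < \<alpha>2 \<and> 0 < \<beta> \<and>
          poly p \<alpha>1 = 0 \<and> poly p \<alpha>2 = 0 \<and> poly p (-\<beta>) = 0 \<longrightarrow> \<beta> < \<alpha>1 \<and> \<alpha>1 < \<alpha>2))
    \<and>
    ((\<forall>j \<le> d. even j \<longrightarrow> monomial_sign \<sigma> j) \<longrightarrow>
       (\<exists>p. realizes p \<sigma> 2 1) \<and>
       (\<forall>p \<alpha>1 \<alpha>2 \<beta>. realizes p \<sigma> 2 1 \<and> 0 < \<alpha>1 \<and> \<alpha>1 < \<alpha>2 \<and> 0 < \<beta> \<and>
          poly p \<alpha>1 = 0 \<and> poly p \<alpha>2 = 0 \<and> poly p (-\<beta>) = 0 \<longrightarrow> \<alpha>1 < \<alpha>2 \<and> \<alpha>2 < \<beta>))"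
proof -
  note pf = pattern_facts[OF assms(2,3)]
  obtain j where j: "j \<le> d" "\<not> monomial_sign \<sigma> j" using pf(3) by blast
  show ?thesis
  proof (rule conjI)
   show "(\<forall>j \<le> d. odd j \<longrightarrow> monomial_sign \<sigma> j) \<longrightarrow>
       (\<exists>p. realizes p \<sigma> 2 1) \<and>
       (\<forall>p \<alpha>1 \<alpha>2 \<beta>. realizes p \<sigma> 2 1 \<and> 0 < \<alpha>1 \<and> \<alpha>1 < \<alpha>2 \<and> 0 < \<beta> \<and>
          poly p \<alpha>1 = 0 \<and> poly p \<alpha>2 = 0 \<and> poly p (-\<beta>) = 0 \<longrightarrow> \<beta> < \<alpha>1 \<and> \<alpha>1 < \<alpha>2)"
   proof (intro impI conjI)
    assume h: "\<forall>j \<le> d. odd j \<longrightarrow> monomial_sign \<sigma> j"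
    have ej: "even j" using h j by auto
    have j0: "j \<noteq> 0"
    proof
      assume "j = 0" then show False using pf(1) j(2) by simp
    qed
    have "j \<noteq> d" using ej assms(1) by auto
    then have jd: "j < d" using j(1) by simp
    show "\<exists>p. realizes p \<sigma> 2 1"
      by (rule case3_exists[OF assms(2,1) ej _ jd _ pf(1) j(2)]) (use j0 h in auto)
    show "\<forall>p \<alpha>1 \<alpha>2 \<beta>. realizes p \<sigma> 2 1 \<and> 0 < \<alpha>1 \<and> \<alpha>1 < \<alpha>2 \<and> 0 < \<beta> \<and>
          poly p \<alpha>1 = 0 \<and> poly p \<alpha>2 = 0 \<and> poly p (-\<beta>) = 0 \<longrightarrow> \<beta> < \<alpha>1 \<and> \<alpha>1 < \<alpha>2"
    proof (intro allI impI)
    fix p \<alpha>1 \<alpha>2 \<beta>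
    assume H: "realizes p \<sigma> 2 1 \<and> 0 < \<alpha>1 \<and> \<alpha>1 < \<alpha>2 \<and> 0 < \<beta> \<and>
          poly p \<alpha>1 = 0 \<and> poly p \<alpha>2 = 0 \<and> poly p (-\<beta>) = 0"
    show "\<beta> < \<alpha>1 \<and> \<alpha>1 < \<alpha>2"
      using ineq3[OF _ assms(2,1) pf(1), of p \<alpha>1 \<beta>] H h by auto
    qed
   qed
  next
   show "(\<forall>j \<le> d. even j \<longrightarrow> monomial_sign \<sigma> j) \<longrightarrow>
       (\<exists>p. realizes p \<sigma> 2 1) \<and>
       (\<forall>p \<alpha>1 \<alpha>2 \<beta>. realizes p \<sigma> 2 1 \<and> 0 < \<alpha>1 \<and> \<alpha>1 < \<alpha>2 \<and> 0 < \<beta> \<and>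
          poly p \<alpha>1 = 0 \<and> poly p \<alpha>2 = 0 \<and> poly p (-\<beta>) = 0 \<longrightarrow> \<alpha>1 < \<alpha>2 \<and> \<alpha>2 < \<beta>)"
   proof (intro impI conjI)
    assume h: "\<forall>j \<le> d. even j \<longrightarrow> monomial_sign \<sigma> j"
    have oj: "odd j" using h j by auto
    have jd: "j \<noteq> d" using pf(2) j by auto
    have j2: "j + 2 \<le> d" using j(1) jd oj assms(1) by presburger
    show "\<exists>p. realizes p \<sigma> 2 1"
      by (rule case4_exists[OF assms(2,1) oj j2 _ j(2)]) (use h in auto)
    show "\<forall>p \<alpha>1 \<alpha>2 \<beta>. realizes p \<sigma> 2 1 \<and> 0 < \<alpha>1 \<and> \<alpha>1 < \<alpha>2 \<and> 0 < \<beta> \<and>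
          poly p \<alpha>1 = 0 \<and> poly p \<alpha>2 = 0 \<and> poly p (-\<beta>) = 0 \<longrightarrow> \<alpha>1 < \<alpha>2 \<and> \<alpha>2 < \<beta>"
    proof (intro allI impI)
    fix p \<alpha>1 \<alpha>2 \<beta>
    assume H: "realizes p \<sigma> 2 1 \<and> 0 < \<alpha>1 \<and> \<alpha>1 < \<alpha>2 \<and> 0 < \<beta> \<and>
          poly p \<alpha>1 = 0 \<and> poly p \<alpha>2 = 0 \<and> poly p (-\<beta>) = 0"
    show "\<alpha>1 < \<alpha>2 \<and> \<alpha>2 < \<beta>"
      using ineq4[OF _ assms(2,1), of p \<alpha>2 \<beta>] H h by auto
    qed
   qed
  qed
qed


end
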